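(* Let $0<\kappa_0\le1$, $0<\alpha_0\le1$, $T\ge8$, $M=4T\kappa_0^{-1}$, $\Lambda\subset\mathfrak T$, and let $w,D$ be as in the context with $D\in\mathcal G_{\Lambda,T,\kappa_0}$. If $\gamma=(n_1,\dots,n_k)\in\Gamma_{D,T,\kappa_0}(n_1,n_k;k,\Lambda,\mathfrak R)$, then $$W_{D,\kappa_0}(\gamma)\le\exp\big(kM^2-\kappa_0(1-2^{-9})\|\gamma\|+2\bar D(\gamma)\big).$$
   Context: $(\mathfrak T,+)$ is an Abelian group with $|\cdot|:\mathfrak T\to[0,\infty)$, $|m|=0$ iff $m=0$, $|m+n|\le|m|+|n|$. Fix $\Lambda\subset\mathfrak T$ and functions $w:\Lambda\times\Lambda\to[0,\infty)$, $D:\Lambda\to[1,\infty)$ with $w(m,m)=1$ and $w(m,n)\le\exp(-\kappa_0|m-n|^{\alpha_0})$. A trajectory is a finite sequence $\gamma=(n_1,\dots,n_k)$ of points of $\Lambda$, $k\ge1$, with $n_{j+1}\ne n_j$. Put $\|\gamma\|=\sum_{i=1}^{k-1}|n_i-n_{i+1}|^{\alpha_0}$ ($=0$ if $k=1$), $\bar D(\gamma)=\max_jD(n_j)$, $W_{D,\kappa_0}(\gamma)=\exp(-\kappa_0\|\gamma\|+\sum_{j=1}^kD(n_j))$. Let $\mu_\Lambda(m)=\inf\{|m-n|:n\in\mathfrak T\setminus\Lambda\}$. $D\in\mathcal G_{\Lambda,T,\kappa_0}$ means: $D(m)\le T\mu_\Lambda(m)^{\alpha_0/5}$ for every $m$ with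 $D(m)\ge4T\kappa_0^{-1}$. For $D\in\mathcal G_{\Lambda,T,\kappa_0}$, $\Gamma_{D,T,\kappa_0}(n_1,n_k;k,\Lambda,\mathfrak R)$ is the set of trajectories $\gamma=(n_1,\dots,n_k)$ such that: (A) for all $i<j$ with $j\ge i+2$ and $\min(D(n_i),D(n_j))\ge4T\kappa_0^{-1}$ one has $\min(D(n_i),D(n_j))\le T\|(n_i,\dots,n_j)\|^{\alpha_0/5}$; and (B) if for some $i$ one has $\min(D(n_i),D(n_{i+1}))\ge4T\kappa_0^{-1}$ and $\min(D(n_i),D(n_{i+1}))>T|n_i-n_{i+1}|^{\alpha_0/5}$, then for all $j'<i<i+1<j''$: $\min(D(n_{j'}),D(n_i))\le T\|(n_{j'},\dots,n_i)\|^{\alpha_0/5}$, $\min(D(n_i),D(n_{j''}))\le T\|(n_i,\dots,n_{j''})\|^{\alpha_0/5}$, $\min(D(n_{j'}),D(n_{i+1}))\le T\|(n_{j'},\dots,n_{i+1})\|^{\alpha_0/5}$, $\min(D(n_{i+1}),D(n_{j''}))\le T\|(n_{i+1},\dots,n_{j''})\|^{\alpha_0/5}$. *)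

theory Defs
  imports Complex_Main
begin

(* Trajectories are lists ns = [n_1,...,n_k] (0-based indices in Isabelle). *)

definition is_trajectory :: "'a set \<Rightarrow> 'a list \<Rightarrow> bool" where
  "is_trajectory \<Lambda> ns \<longleftrightarrow> ns \<noteq> [] \<and> set ns \<subseteq> \<Lambda> \<and>
     (\<forall>j. Suc j < length ns \<longrightarrow> ns ! Suc j \<noteq> ns ! j)"

definition seg_norm :: "('a::ab_group_add \<Rightarrow> real) \<Rightarrow> real \<Rightarrow> 'a list \<Rightarrow> nat \<Rightarrow> nat \<Rightarrow> real" where
  "seg_norm nrm \<alpha>0 ns i j = (\<Sum>l\<in>{i..<j}. nrm (ns ! l - ns ! Suc l) powr \<alpha>0)"

definition traj_norm :: "('a::ab_group_add \<Rightarrow> real) \<Rightarrow> real \<Rightarrow> 'a list \<Rightarrow> real" where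
  "traj_norm nrm \<alpha>0 ns = seg_norm nrm \<alpha>0 ns 0 (length ns - 1)"

definition Dbar :: "('a \<Rightarrow> real) \<Rightarrow> 'a list \<Rightarrow> real" where
  "Dbar D ns = Max (D ` set ns)"

definition W_weight :: "('a::ab_group_add \<Rightarrow> real) \<Rightarrow> real \<Rightarrow> ('a \<Rightarrow> real) \<Rightarrow> real \<Rightarrow> 'a list \<Rightarrow> real" where
  "W_weight nrm \<alpha>0 D \<kappa>0 ns = exp (- \<kappa>0 * traj_norm nrm \<alpha>0 ns + (\<Sum>j<length ns. D (ns ! j)))"

(* D \<in> G_{\<Lambda>,T,\<kappa>0}: D(m) \<le> T \<mu>_\<Lambda>(m)^(\<alpha>0/5) whenever D(m) \<ge> 4T/\<kappa>0, where
   \<mu>_\<Lambda>(m) = inf{|m-n| : n \<notin> \<Lambda>} (= +\<infinity> if \<Lambda> is everything). Since t \<mapsto> T t^(\<alpha>0/5)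
   is continuous and nondecreasing on [0,\<infinity>), this is the same as the bound against
   every n outside \<Lambda>. *)
definition in_G :: "('a::ab_group_add \<Rightarrow> real) \<Rightarrow> real \<Rightarrow> 'a set \<Rightarrow> real \<Rightarrow> real \<Rightarrow> ('a \<Rightarrow> real) \<Rightarrow> bool" where
  "in_G nrm \<alpha>0 \<Lambda> T \<kappa>0 D \<longleftrightarrow>
     (\<forall>m\<in>\<Lambda>. D m \<ge> 4 * T / \<kappa>0 \<longrightarrow> (\<forall>n. n \<notin> \<Lambda> \<longrightarrow> D m \<le> T * nrm (m - n) powr (\<alpha>0 / 5)))"

definition in_Gamma :: "('a::ab_group_add \<Rightarrow> real) \<Rightarrow> real \<Rightarrow> 'a set \<Rightarrow> real \<Rightarrow> real \<Rightarrow> ('a \<Rightarrow> real) \<Rightarrow> 'a list \<Rightarrow> bool" where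
  "in_Gamma nrm \<alpha>0 \<Lambda> T \<kappa>0 D ns \<longleftrightarrow>
     (let k = length ns; M = 4 * T / \<kappa>0; sn = seg_norm nrm \<alpha>0 ns;
          ok = (\<lambda>a b. min (D (ns ! a)) (D (ns ! b)) \<le> T * sn a b powr (\<alpha>0 / 5)) in
      is_trajectory \<Lambda> ns \<and>
      \<comment> \<open>(A)\<close>
      (\<forall>i j. i + 2 \<le> j \<and> j < k \<and> min (D (ns ! i)) (D (ns ! j)) \<ge> M \<longrightarrow> ok i j) \<and>
      \<comment> \<open>(B)\<close>
      (\<forall>i. Suc i < k \<and> min (D (ns ! i)) (D (ns ! Suc i)) \<ge> M \<and>
             min (D (ns ! i)) (D (ns ! Suc i)) > T * nrm (ns ! i - ns ! Suc i) powr (\<alpha>0 / 5) \<longrightarrow>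
           (\<forall>j'. j' < i \<longrightarrow> ok j' i \<and> ok j' (Suc i)) \<and>
           (\<forall>j''. Suc i < j'' \<and> j'' < k \<longrightarrow> ok i j'' \<and> ok (Suc i) j'')))"

end

theory Submission
  imports Defs
begin

lemma poly5:
  fixes a b :: real
  assumes "0 \<le> a" "a \<le> b"
  shows "b^5 - 5*b*a^4 + 4*a^5 \<ge> 0"
proof -
  have "b^5 - 5*b*a^4 + 4*a^5 = (b-a)^2 * (b^3+2*a*b^2+3*a^2*b+4*a^3)"
    by (simp add: algebra_simps power2_eq_square power3_eq_cube eval_nat_numeral)
  also have "\<dots> \<ge> 0" using assms by (intro mult_nonneg_nonneg) auto
  finally show ?thesis .
qed

lemma seg_split:
  "i \<le> j \<Longrightarrow> j \<le> l \<Longrightarrow> seg_norm nrm \<alpha> ns i l = seg_norm nrm \<alpha> ns i j + seg_norm nrm \<alpha> ns j l"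
  unfolding seg_norm_def by (simp add: sum.atLeastLessThan_concat)

lemma seg_nonneg: "seg_norm nrm \<alpha> ns i j \<ge> 0"
  unfolding seg_norm_def by (simp add: sum_nonneg)

lemma count_lemma:
  fixes sg :: "nat \<Rightarrow> nat \<Rightarrow> real" and L :: real
  assumes split: "\<And>i j l. i \<le> j \<Longrightarrow> j \<le> l \<Longrightarrow> sg i l = sg i j + sg j l"
    and nn: "\<And>i j. sg i j \<ge> 0" and L: "L \<ge> 0"
    and sep: "\<And>a b. a \<in> S \<Longrightarrow> b \<in> S \<Longrightarrow> a + 2 \<le> b \<Longrightarrow> L \<le> sg a b"
    and fin: "finite S" and ne: "S \<noteq> {}"
  shows "(real (card S) - 2) * L \<le> 2 * sg (Min S) (Max S)"
  using fin ne sep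
proof (induction "card S" arbitrary: S rule: less_induct)
  case less
  show ?case
  proof (cases "card S \<le> 2")
    case True
    then have "(real (card S) - 2) * L \<le> 0" using L by (simp add: mult_nonpos_nonneg)
    also have "0 \<le> 2 * sg (Min S) (Max S)" using nn by simp
    finally show ?thesis .
  next
    case False
    define m where "m = Max S"
    define S1 where "S1 = S - {m}"
    define m1 where "m1 = Max S1"
    define S2 where "S2 = S1 - {m1}"
    define m2 where "m2 = Max S2"
    have mS: "m \<in> S" using less m_def by auto
    have cS1: "card S1 = card S - 1" using mS less by (simp add: S1_def)
    have fS1a: "finite S1" using less by (simp add: S1_def)
    have fS1: "finite S1" "S1 \<noteq> {}" using fS1a cS1 False by (auto simp del: card_Diff_insert)
    have m1S1: "m1 \<in> S1" using fS1 m1_def by auto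
    have cS2: "card S2 = card S - 2" using m1S1 fS1 cS1 by (simp add: S2_def)
    have fS2a: "finite S2" using fS1 by (simp add: S2_def)
    have fS2: "finite S2" "S2 \<noteq> {}" using fS2a cS2 False by (auto simp del: card_Diff_insert)
    have m2S2: "m2 \<in> S2" using fS2 m2_def by auto
    have m1m: "m1 < m" using m1S1 less(2) m_def S1_def
      by (metis Diff_iff Max_ge insertI1 order_le_neq_trans)
    have m2m1: "m2 < m1" using m2S2 fS1 m1_def S2_def
      by (metis Diff_iff Max_ge insertI1 order_le_neq_trans)
    have S2S: "S2 \<subseteq> S" by (auto simp: S2_def S1_def)
    have IH: "(real (card S2) - 2) * L \<le> 2 * sg (Min S2) (Max S2)"
      apply (rule less(1)) using cS2 False fS2 less(4) S2S by auto
    have minle: "Min S \<le> Min S2" using S2S fS2 less(2) by (metis Min_antimono)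
    have min2le: "Min S2 \<le> m2" using fS2 m2_def by simp
    have sp: "sg (Min S) m = sg (Min S) (Min S2) + sg (Min S2) m2 + sg m2 m"
      using split minle min2le m2m1 m1m by (metis less_imp_le order.trans)
    have "L \<le> sg m2 m" using less(4) m2S2 S2S mS m2m1 m1m by auto
    moreover have "real (card S2) - 2 = real (card S) - 4" using cS2 False by simp
    moreover have "(real (card S) - 2) * L = (real (card S2) - 2) * L + 2 * L"
      using cS2 False by (simp add: algebra_simps)
    moreover have "(real (card S2) - 2) * L \<le> 2 * sg (Min S2) m2" using IH m2_def by simp
    ultimately have "(real (card S) - 2) * L \<le> 2 * sg (Min S) m" using sp nn[of "Min S" "Min S2"]
      by linarith
    then show ?thesis using m_def by simp
  qed
qed




lemma sum_lemma:
  fixes Dv :: "nat \<Rightarrow> real" and B :: "nat set"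
  assumes H: "\<And>S v. S \<subseteq> B \<Longrightarrow> S \<noteq> {} \<Longrightarrow> (\<forall>j\<in>S. v \<le> Dv j) \<Longrightarrow> M \<le> v
               \<Longrightarrow> (real (card S) - 2) * (v / T)^5 \<le> P"
    and big: "\<And>j. j \<in> B \<Longrightarrow> M \<le> Dv j"
    and ub: "\<And>j. j \<in> B \<Longrightarrow> Dv j \<le> Db"
    and Db: "0 \<le> Db" and P: "0 \<le> P" and T: "0 < T" and finB: "finite B"
  shows "S \<subseteq> B \<Longrightarrow> sum Dv S \<le> 2*Db + 5/4*T*root 5 P * (root 5 (real (card S - 2)))^4"
proof (induction "card S" arbitrary: S rule: less_induct)
  case less
  have finS: "finite S" using less(2) finB finite_subset by blast
  have Fnn: "0 \<le> 5/4*T*root 5 P * (root 5 (real (card S - 2)))^4"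
    using T P by (simp add: real_root_ge_zero)
  show ?case
  proof (cases "card S \<le> 2")
    case True
    have "sum Dv S \<le> sum (\<lambda>_. Db) S" using less(2) ub by (intro sum_mono) auto
    also have "\<dots> = real (card S) * Db" by simp
    also have "\<dots> \<le> 2 * Db" using True Db by (intro mult_right_mono) auto
    finally show ?thesis using Fnn by linarith
  next
    case False
    define n where "n = card S - 3"
    have cS: "card S = n + 3" using False unfolding n_def by simp
    have neS: "S \<noteq> {}" using cS by auto
    define v where "v = Min (Dv ` S)"
    have "v \<in> Dv ` S" unfolding v_def using finS neS by simp
    then obtain j0 where j0: "j0 \<in> S" "Dv j0 = v" by auto
    have vle: "\<forall>j\<in>S. v \<le> Dv j" unfolding v_def using finS by simp
    have vM: "M \<le> v" using j0 less(2) big by auto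
    define S' where "S' = S - {j0}"
    have cS': "card S' = n + 2" using cS j0 finS by (simp add: S'_def)
    have IH: "sum Dv S' \<le> 2*Db + 5/4*T*root 5 P * (root 5 (real (card S' - 2)))^4"
      by (rule less(1)) (use cS cS' less(2) in \<open>auto simp: S'_def\<close>)
    have sumS: "sum Dv S = v + sum Dv S'" using j0 finS by (simp add: S'_def sum.remove)
    have Hn: "(real n + 1) * (v / T)^5 \<le> P" proof -
      have "real (card S) - 2 = real n + 1" using cS by simp
      then have "(real n + 1) * (v / T)^5 = (real (card S) - 2) * (v / T)^5" by simp
      then show ?thesis using H[OF less(2) neS vle vM] by linarith
    qed
    define a where "a = root 5 (real n)"
    define b where "b = root 5 (real n + 1)"
    define p where "p = root 5 P"
    have a5: "a^5 = real n" unfolding a_def by simp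
    have b5: "b^5 = real n + 1" unfolding b_def by simp
    have p5: "p^5 = P" unfolding p_def using P by simp
    have a0: "0 \<le> a" unfolding a_def by (simp add: real_root_ge_zero)
    have ab: "a \<le> b" unfolding a_def b_def by (rule real_root_le_mono) auto
    have bpos: "0 < b" unfolding b_def by simp
    have p0: "0 \<le> p" unfolding p_def using P by (simp add: real_root_ge_zero)
    have vT: "(v/T)^5 * T^5 = v^5" using T by (simp add: power_divide)
    have "(b*v)^5 = b^5 * v^5" by (rule power_mult_distrib)
    also have "\<dots> = (real n+1) * ((v/T)^5 * T^5)" using b5 vT by simp
    also have "\<dots> = ((real n+1)*(v/T)^5) * T^5" by (rule mult.assoc[symmetric])
    also have "\<dots> \<le> P*T^5" using Hn T by (intro mult_right_mono) auto
    also have "\<dots> = p^5 * T^5" using p5 by simp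
    also have "\<dots> = (p*T)^5" by (rule power_mult_distrib[symmetric])
    finally have X5: "(b*v)^5 \<le> (p*T)^5" .
    have "b*v \<le> p*T" by (rule power_le_imp_le_base[of _ 4]) (use X5 p0 T in auto)
    moreover have "5*b*(b^4-a^4) \<ge> 4"
    proof -
      have "b^5 - 5*b*a^4 + 4*a^5 \<ge> 0" by (rule poly5[OF a0 ab])
      moreover have "b*b^4 = b^5" by (simp add: eval_nat_numeral)
      moreover have "5*b*(b^4-a^4) = 5*(b*b^4) - 5*b*a^4" by (simp add: algebra_simps)
      ultimately show ?thesis using a5 b5 by linarith
    qed
    ultimately have "b*v \<le> b * (5/4*T*p*(b^4-a^4))"
    proof -
      assume 1: "b*v \<le> p*T" and 2: "5*b*(b^4-a^4) \<ge> 4"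
      have "p*T*4 \<le> p*T*(5*b*(b^4-a^4))" using 2 p0 T by (intro mult_left_mono) auto
      then have "p*T \<le> b * (5/4*T*p*(b^4-a^4))" by (simp add: algebra_simps)
      then show ?thesis using 1 by linarith
    qed
    then have vb: "v \<le> 5/4*T*p*(b^4-a^4)" using bpos by simp
    have e1: "card S - 2 = n + 1" "card S' - 2 = n" using cS cS' by auto
    have IH': "sum Dv S' \<le> 2*Db + 5/4*T*p*a^4" using IH e1 unfolding a_def p_def by simp
    have "sum Dv S \<le> 2*Db + 5/4*T*p*b^4" using IH' sumS vb by (simp add: algebra_simps)
    then show ?thesis using e1 unfolding b_def p_def by (simp add: add.commute)
  qed
qed

lemma final_bound:
  fixes T \<kappa>0 \<Lambda> :: real
  assumes "0 < \<kappa>0" "\<kappa>0 \<le> 1" "T \<ge> 8" "0 \<le> \<Lambda>"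
  shows "5/4*T*root 5 (2*\<Lambda>) * (root 5 (real n))^4 \<le> real n * (4*T/\<kappa>0)^2 + \<kappa>0/512*\<Lambda>"
proof -
  define a where "a = root 5 (real n)"
  define p where "p = root 5 (2*\<Lambda>)"
  define q where "q = 8*T/\<kappa>0"
  have a5: "a^5 = real n" unfolding a_def by simp
  have p5: "p^5 = 2*\<Lambda>" unfolding p_def using assms by simp
  have a0: "0 \<le> a" unfolding a_def by (simp add: real_root_ge_zero)
  have p0: "0 \<le> p" unfolding p_def using assms by (simp add: real_root_ge_zero)
  have qpos: "0 < q" unfolding q_def using assms by simp
  have c1: "5/4*T*q \<le> (4*T/\<kappa>0)^2"
  proof -
    have "5/4*T*q = 10*T^2/\<kappa>0" unfolding q_def by (simp add: power2_eq_square)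
    also have "\<dots> \<le> 16*T^2/\<kappa>0" using assms by (intro divide_right_mono) auto
    also have "\<dots> \<le> 16*T^2/\<kappa>0^2"
      using assms by (intro divide_left_mono) (auto simp: power2_eq_square mult_le_cancel_left1)
    also have "\<dots> = (4*T/\<kappa>0)^2" by (simp add: power_divide)
    finally show ?thesis .
  qed
  have c2: "5/2*T \<le> \<kappa>0/512 * q^4"
  proof -
    have "q^4 = 4096 * T^4/\<kappa>0^4" unfolding q_def by (simp add: power_divide power_mult_distrib)
    then have "\<kappa>0/512 * q^4 = 8*T^4/\<kappa>0^3" using assms by (simp add: field_simps eval_nat_numeral)
    also have "\<dots> \<ge> 8*T^4" using assms
      by (simp add: le_divide_eq power_le_one mult_left_le)
    moreover have "8*T^4 \<ge> 5/2*T" using assms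
    proof -
      have "T^3 \<ge> 1" using assms by (simp add: one_le_power)
      then have "T*T^3 \<ge> T*1" using assms by (intro mult_left_mono) auto
      then show ?thesis using assms by (simp add: eval_nat_numeral algebra_simps)
    qed
    ultimately show ?thesis by linarith
  qed
  show ?thesis
  proof (cases "p \<le> q*a")
    case True
    have "5/4*T*p*a^4 \<le> 5/4*T*(q*a)*a^4" using True assms a0 by (intro mult_right_mono mult_left_mono) auto
    also have "\<dots> = 5/4*T*q*real n" using a5 by (simp add: eval_nat_numeral algebra_simps)
    also have "\<dots> \<le> real n * (4*T/\<kappa>0)^2" proof -
      have "real n * (5/4*T*q) \<le> real n * (4*T/\<kappa>0)^2" by (rule mult_left_mono[OF c1]) simp
      then show ?thesis by (simp only: mult.commute)
    qed
    finally have X: "5/4*T*p*a^4 \<le> real n * (4*T/\<kappa>0)^2" .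
    have "0 \<le> \<kappa>0/512*\<Lambda>" using assms by simp
    with X have "5/4*T*p*a^4 \<le> real n * (4*T/\<kappa>0)^2 + \<kappa>0/512*\<Lambda>" by linarith
    then show ?thesis unfolding a_def p_def .
  next
    case False
    then have "a \<le> p/q" using qpos by (simp add: field_simps)
    then have "a^4 \<le> (p/q)^4" using a0 by (intro power_mono) auto
    then have "5/4*T*p*a^4 \<le> 5/4*T*p*(p/q)^4" using assms p0 by (intro mult_left_mono) auto
    also have "\<dots> = 5/4*T*(p*p^4)/q^4" by (simp add: power_divide mult.assoc)
    also have "\<dots> = 5/4*T*(2*\<Lambda>)/q^4" using p5 by (simp add: eval_nat_numeral)
    also have "\<dots> = (5/2*T)*\<Lambda>/q^4" by simp
    also have "\<dots> \<le> (\<kappa>0/512*q^4)*\<Lambda>/q^4" using c2 assms qpos by (intro divide_right_mono mult_right_mono) auto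
    also have "\<dots> = \<kappa>0/512*\<Lambda>" using qpos by simp
    finally have X: "5/4*T*p*a^4 \<le> \<kappa>0/512*\<Lambda>" .
    have "0 \<le> real n * (4*T/\<kappa>0)^2" by simp
    with X have "5/4*T*p*a^4 \<le> real n * (4*T/\<kappa>0)^2 + \<kappa>0/512*\<Lambda>" by linarith
    then show ?thesis unfolding a_def p_def .
  qed
qed

theorem mainTheorem2:
  fixes nrm :: "'a::ab_group_add \<Rightarrow> real"
    and \<Lambda> :: "'a set"
    and w :: "'a \<Rightarrow> 'a \<Rightarrow> real"
    and D :: "'a \<Rightarrow> real"
    and \<kappa>0 \<alpha>0 T M :: real
    and ns :: "'a list"
  assumes nrm_nonneg: "\<And>m. nrm m \<ge> 0"
    and nrm_zero: "\<And>m. nrm m = 0 \<longleftrightarrow> m = 0"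
    and nrm_triangle: "\<And>m n. nrm (m + n) \<le> nrm m + nrm n"
    and \<kappa>0: "0 < \<kappa>0" "\<kappa>0 \<le> 1"
    and \<alpha>0: "0 < \<alpha>0" "\<alpha>0 \<le> 1"
    and T: "T \<ge> 8"
    and M_def: "M = 4 * T / \<kappa>0"
    and w_nonneg: "\<And>m n. m \<in> \<Lambda> \<Longrightarrow> n \<in> \<Lambda> \<Longrightarrow> w m n \<ge> 0"
    and w_diag: "\<And>m. m \<in> \<Lambda> \<Longrightarrow> w m m = 1"
    and w_decay: "\<And>m n. m \<in> \<Lambda> \<Longrightarrow> n \<in> \<Lambda> \<Longrightarrow> w m n \<le> exp (- \<kappa>0 * nrm (m - n) powr \<alpha>0)"
    and D_ge1: "\<And>m. m \<in> \<Lambda> \<Longrightarrow> D m \<ge> 1"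
    and D_G: "in_G nrm \<alpha>0 \<Lambda> T \<kappa>0 D"
    and gamma: "in_Gamma nrm \<alpha>0 \<Lambda> T \<kappa>0 D ns"
  shows "W_weight nrm \<alpha>0 D \<kappa>0 ns
           \<le> exp (real (length ns) * M\<^sup>2 - \<kappa>0 * (1 - 2 powr (-9)) * traj_norm nrm \<alpha>0 ns
                  + 2 * Dbar D ns)"
proof -
  define k where "k = length ns"
  define sg where "sg = seg_norm nrm \<alpha>0 ns"
  define Dv where "Dv = (\<lambda>j. D (ns ! j))"
  define B where "B = {j. j < k \<and> M \<le> Dv j}"
  define Lt where "Lt = traj_norm nrm \<alpha>0 ns"
  define Db where "Db = Dbar D ns"
  have Tpos: "0 < T" using T by simp
  have M4: "4*T \<le> M" unfolding M_def using \<kappa>0 Tpos by (simp add: le_divide_eq mult_left_le)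
  have traj: "is_trajectory \<Lambda> ns"
    and A: "\<forall>i j. i + 2 \<le> j \<and> j < k \<and> M \<le> min (Dv i) (Dv j) \<longrightarrow>
               min (Dv i) (Dv j) \<le> T * sg i j powr (\<alpha>0/5)"
    using gamma unfolding in_Gamma_def Let_def by (auto simp: k_def sg_def Dv_def M_def)
  have kpos: "0 < k" and setns: "set ns \<subseteq> \<Lambda>"
    using traj unfolding is_trajectory_def k_def by auto
  have Dv_ub: "Dv j \<le> Db" if "j < k" for j
  proof -
    have "ns ! j \<in> set ns" using that k_def by simp
    then show ?thesis unfolding Dv_def Db_def Dbar_def by (intro Max_ge) auto
  qed
  have Db1: "1 \<le> Db"
  proof -
    have "ns ! 0 \<in> \<Lambda>" using setns kpos k_def nth_mem by blast
    then have "1 \<le> Dv 0" using D_ge1 Dv_def by simp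
    then show ?thesis using Dv_ub[OF kpos] by simp
  qed
  have Ltdef: "Lt = sg 0 (k-1)" by (simp add: Lt_def traj_norm_def sg_def k_def)
  have sgnn: "\<And>i j. 0 \<le> sg i j" unfolding sg_def by (rule seg_nonneg)
  have sgsplit: "\<And>i j l. i \<le> j \<Longrightarrow> j \<le> l \<Longrightarrow> sg i l = sg i j + sg j l"
    unfolding sg_def by (rule seg_split)
  have Lt0: "0 \<le> Lt" using Ltdef sgnn by simp
  have sep: "(v/T)^5 \<le> sg a b"
    if ab: "a \<in> B" "b \<in> B" "a + 2 \<le> b" and v: "M \<le> v" "v \<le> Dv a" "v \<le> Dv b" for a b v
  proof -
    define s where "s = sg a b"
    have s0: "0 \<le> s" unfolding s_def by (rule sgnn)
    have "M \<le> min (Dv a) (Dv b)" using v by simp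
    moreover have "b < k" using ab B_def by simp
    ultimately have "min (Dv a) (Dv b) \<le> T * s powr (\<alpha>0/5)" using A ab(3) s_def by blast
    then have vle: "v \<le> T * s powr (\<alpha>0/5)" using v by linarith
    have s1: "1 < s"
    proof (rule ccontr)
      assume "\<not> 1 < s"
      then have "s powr (\<alpha>0/5) \<le> s powr 0" using s0 \<alpha>0 by (intro powr_mono') auto
      also have "\<dots> \<le> 1" by simp
      finally have "T * s powr (\<alpha>0/5) \<le> T" using Tpos by (simp add: mult_left_le)
      then show False using vle v M4 Tpos by linarith
    qed
    have "s powr (\<alpha>0/5) \<le> s powr (1/5)" using s1 \<alpha>0 by (intro powr_mono) auto
    then have "T * s powr (\<alpha>0/5) \<le> T * s powr (1/5)" using Tpos by (intro mult_left_mono) auto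
    then have "v \<le> T * s powr (1/5)" using vle by linarith
    then have "v/T \<le> s powr (1/5)" using Tpos by (simp add: divide_le_eq mult.commute)
    moreover have "0 \<le> v/T" using v M4 Tpos by simp
    ultimately have "(v/T)^5 \<le> (s powr (1/5))^5" by (intro power_mono) auto
    also have "(s powr (1/5))^5 = s"
    proof -
      have "(s powr (1/5))^5 = (s powr (1/5)) powr (real 5)" using s1 by (subst powr_realpow) auto
      also have "\<dots> = s" using s0 by (simp add: powr_powr)
      finally show ?thesis .
    qed
    finally show ?thesis unfolding s_def .
  qed
  have finB: "finite B" unfolding B_def by simp
  have H: "(real (card S) - 2) * (v / T)^5 \<le> 2*Lt"
    if S: "S \<subseteq> B" "S \<noteq> {}" "\<forall>j\<in>S. v \<le> Dv j" "M \<le> v" for S v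
  proof -
    have finS: "finite S" using S finB finite_subset by blast
    have "(real (card S) - 2) * (v / T)^5 \<le> 2 * sg (Min S) (Max S)"
    proof (rule count_lemma[OF sgsplit sgnn _ _ finS S(2)])
      show "0 \<le> (v/T)^5" using S M4 Tpos by simp
      show "\<And>a b. a \<in> S \<Longrightarrow> b \<in> S \<Longrightarrow> a + 2 \<le> b \<Longrightarrow> (v/T)^5 \<le> sg a b"
        using sep S by blast
    qed
    moreover have "sg (Min S) (Max S) \<le> Lt"
    proof -
      have "Max S \<in> B" using finS S by (meson Max_in subsetD)
      then have "Max S \<le> k - 1" unfolding B_def by auto
      moreover have "Min S \<le> Max S" using finS S by simp
      ultimately have "Lt = sg 0 (Min S) + sg (Min S) (Max S) + sg (Max S) (k-1)"
        using Ltdef sgsplit by (metis le0 order.trans)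
      then show ?thesis using sgnn[of 0 "Min S"] sgnn[of "Max S" "k-1"] by linarith
    qed
    ultimately show ?thesis by linarith
  qed
  have SB: "sum Dv B \<le> 2*Db + 5/4*T*root 5 (2*Lt) * (root 5 (real (card B - 2)))^4"
    by (rule sum_lemma[OF H]) (use finB Db1 Lt0 Tpos Dv_ub in \<open>auto simp: B_def\<close>)
  have FB: "5/4*T*root 5 (2*Lt) * (root 5 (real (card B - 2)))^4 \<le> real (card B - 2) * M^2 + \<kappa>0/512*Lt"
    using final_bound[OF \<kappa>0 T Lt0] M_def by simp
  have M1: "M \<le> M^2" proof - have "1 \<le> M" using M4 T by linarith then show ?thesis by (simp add: power2_eq_square) qed
  have SnB: "sum Dv ({..<k} - B) \<le> real (card ({..<k} - B)) * M^2"
  proof -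
    have "sum Dv ({..<k} - B) \<le> sum (\<lambda>_. M^2) ({..<k} - B)"
      by (intro sum_mono) (use M1 in \<open>auto simp: B_def\<close>)
    then show ?thesis by simp
  qed
  have Bsub: "B \<subseteq> {..<k}" unfolding B_def by auto
  have split: "sum Dv {..<k} = sum Dv ({..<k} - B) + sum Dv B"
    using Bsub by (simp add: sum.subset_diff)
  have cardeq: "card ({..<k} - B) = k - card B" using Bsub finB by (simp add: card_Diff_subset)
  have cardB: "card B \<le> k" using Bsub by (metis card_lessThan card_mono finite_lessThan)
  have "real (card ({..<k} - B)) + real (card B - 2) \<le> real k"
    using cardeq cardB by simp
  then have cnt: "real (card ({..<k} - B)) * M^2 + real (card B - 2) * M^2 \<le> real k * M^2"
    by (metis distrib_right mult_right_mono zero_le_power2)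
  have total: "sum Dv {..<k} \<le> real k * M^2 + \<kappa>0/512*Lt + 2*Db"
    using split SnB SB FB cnt by linarith
  have p9: "(2::real) powr (-9) = 1/512" by (simp add: powr_minus)
  have "W_weight nrm \<alpha>0 D \<kappa>0 ns = exp (- \<kappa>0 * Lt + sum Dv {..<k})"
    unfolding W_weight_def Lt_def Dv_def k_def by simp
  also have "\<dots> \<le> exp (real k * M^2 - \<kappa>0 * (1 - 1/512) * Lt + 2 * Db)"
    using total by (simp add: algebra_simps)
  finally show ?thesis unfolding p9 k_def Lt_def Db_def .
qed

end
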